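(* Let $L$ be an integer, $a,b$ divisors of $L$, $M=L/b$, and let $\mathbf g\in\mathbb C^L$ (indexed $L$-periodically) be a window such that $$K_{\mathbf g}:=\frac1b\min_{t\in\{0,\dots,M-1\}}\left(\sum_{k=0}^{b-1}|g[t+kM]|^2\right)>0.$$ Let $\mathcal S_{\mathbf X}[k]\ge 0$ be a power spectrum, $\sigma_0^2>0$, $\delta\in\mathbb R$, and let $C_{\mathbf G}$ be the $M\times M$ matrix $$C_{\mathbf G}[m,m']=C_{\mathcal G_{\mathbf Z}}[m-\delta,m'-\delta]+C_{\mathcal G_{\mathbf N}}[m,m'],$$ where $C_{\mathcal G_{\mathbf Z}}[\mu,\mu']=\sum_{k\in I^+}\mathcal S_{\mathbf X}[k]\,\overline{\hat g}(k-\mu b)\,\hat g(k-\mu'b)$ and $C_{\mathcal G_{\mathbf N}}[m,m']=\sigma_0^2\sum_{k=0}^{L-1}\overline{\hat g}[k]\hat g[k-(m'-m)b]$ (i.e. the covariance matrix of a fixed-time slice of the Gabor transform of a frequency-shifted wide-sense stationary analytic signal plus circular complex white Gaussian noise of variance $\sigma_0^2$). Then for all $\mathbf x\in\mathbb C^M$, $$\langle C_{\mathbf G}\mathbf x,\mathbf x\rangle\ge \sigma_0^2K_{\mathbf g}\|\mathbf x\|^2,$$ and $C_{\mathbf G}$ is therefore boundedly invertible.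
   Context: $\hat g(\xi)=\sum_{t=0}^{L-1}g[t]e^{-2i\pi\xi t/L}$ is the DFT of $\mathbf g$, evaluated at a possibly non-integer frequency $\xi$; $I^+=\{k:0\le k<L/2\}$ is the set of positive frequency indices. $\langle\cdot,\cdot\rangle$ is the standard Hermitian inner product on $\mathbb C^M$. *)

theory Defs
  imports "HOL-Analysis.Analysis"
begin

definition dft :: "nat \<Rightarrow> (nat \<Rightarrow> complex) \<Rightarrow> real \<Rightarrow> complex" where
  "dft L g xi = (\<Sum>t<L. g t * exp (- (2 * pi * \<i> * complex_of_real xi * of_nat t / of_nat L)))"

definition Iplus :: "nat \<Rightarrow> nat set" where
  "Iplus L = {k. real k < real L / 2}"

definition Kg :: "nat \<Rightarrow> nat \<Rightarrow> (nat \<Rightarrow> complex) \<Rightarrow> real" where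
  "Kg L b g = (1 / real b) *
     Min ((\<lambda>t. \<Sum>k<b. (cmod (g ((t + k * (L div b)) mod L)))\<^sup>2) ` {..<L div b})"

definition CGZ :: "nat \<Rightarrow> nat \<Rightarrow> (nat \<Rightarrow> real) \<Rightarrow> (nat \<Rightarrow> complex) \<Rightarrow> real \<Rightarrow> real \<Rightarrow> complex" where
  "CGZ L b S g \<mu> \<mu>' = (\<Sum>k\<in>Iplus L. complex_of_real (S k) *
       cnj (dft L g (real k - \<mu> * real b)) * dft L g (real k - \<mu>' * real b))"

definition CGN :: "nat \<Rightarrow> nat \<Rightarrow> real \<Rightarrow> (nat \<Rightarrow> complex) \<Rightarrow> nat \<Rightarrow> nat \<Rightarrow> complex" where
  "CGN L b \<sigma>0sq g m m' = complex_of_real \<sigma>0sq * (\<Sum>k<L.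
       cnj (dft L g (real k)) * dft L g (real k - (real m' - real m) * real b))"

definition CG :: "nat \<Rightarrow> nat \<Rightarrow> (nat \<Rightarrow> real) \<Rightarrow> real \<Rightarrow> real \<Rightarrow> (nat \<Rightarrow> complex) \<Rightarrow> nat \<Rightarrow> nat \<Rightarrow> complex" where
  "CG L b S \<sigma>0sq \<delta> g m m' = CGZ L b S g (real m - \<delta>) (real m' - \<delta>) + CGN L b \<sigma>0sq g m m'"

end

theory Submission
  imports Defs "Jordan_Normal_Form.Determinant"
begin

lemma ortho:
  fixes N t t' :: nat assumes N: "N>0" and tN: "t<N" and tN': "t'<N"
  shows "(\<Sum>k<N. exp (2*pi*\<i>* of_nat k* of_nat t/of_nat N) * exp (-(2*pi*\<i>* of_nat k* of_nat t'/of_nat N))) = (if t = t' then of_nat N else 0)"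
proof -
  define z where "z = exp (2*pi*\<i>*(of_nat t - of_nat t')/of_nat N)"
  have tm: "exp (2*pi*\<i>* of_nat k* of_nat t/of_nat N) * exp (-(2*pi*\<i>* of_nat k* of_nat t'/of_nat N)) = z^k" for k
  proof -
    have "z^k = exp (of_nat k * (2*pi*\<i>*(of_nat t - of_nat t')/of_nat N))"
      unfolding z_def by (rule exp_of_nat_mult[symmetric])
    also have "\<dots> = exp (2*pi*\<i>* of_nat k* of_nat t/of_nat N + (-(2*pi*\<i>* of_nat k* of_nat t'/of_nat N)))"
      by (rule arg_cong[where f=exp]) (simp add: algebra_simps diff_divide_distrib)
    finally show ?thesis by (simp only: exp_add)
  qed
  show ?thesis
  proof (cases "t = t'")
    case True
    then have "z = 1" by (simp add: z_def)
    then show ?thesis using tm True by simp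
  next
    case False
    have z1: "z \<noteq> 1"
    proof
      assume "z = 1"
      then obtain n :: int where n: "2*pi*(real t - real t')/real N = of_int (2*n) * pi"
        unfolding z_def exp_eq_1 by auto
      then have "2*pi*(real t - real t') = 2*pi*(real N * of_int n)" using N by (simp add: field_simps)
      then have "real t - real t' = real N * of_int n" using pi_neq_zero by simp
      then have e: "int t - int t' = int N * n" by (metis of_int_eq_iff of_int_mult of_int_diff of_int_of_nat_eq)
      show False
      proof (cases "n = 0")
        case True then show False using e False by simp
      next
        case nz: False
        have "\<bar>int N * n\<bar> \<ge> int N" using nz by (simp add: abs_mult mult_le_cancel_left1) linarith
        moreover have "\<bar>int t - int t'\<bar> < int N" using tN tN' by linarith
        ultimately show False using e by simp
      qed
    qed
    have zN: "z^N = 1"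
    proof -
      have "z^N = exp (of_nat N * (2*pi*\<i>*(of_nat t - of_nat t')/of_nat N))"
        unfolding z_def by (rule exp_of_nat_mult[symmetric])
      also have "\<dots> = exp (2*pi*\<i>* of_int (int t - int t'))"
      proof -
        have "(of_nat N::complex) \<noteq> 0" using N by simp
        then have "of_nat N * (2*pi*\<i>*(of_nat t - of_nat t')/of_nat N) = (2*pi*\<i>*(of_nat t - of_nat t') :: complex)"
          by simp
        then show ?thesis by simp
      qed
      also have "\<dots> = 1" by (simp add: exp_eq_1) (metis of_int_diff of_int_of_nat_eq)
      finally show ?thesis .
    qed
    have "(\<Sum>k<N. z^k) = 0" using z1 zN by (simp add: geometric_sum)
    then show ?thesis using tm False by simp
  qed
qed

lemma inv_from_pos:
  fixes C :: "nat \<Rightarrow> nat \<Rightarrow> complex" and c :: real and M :: nat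
  assumes c: "c > 0"
    and pos: "\<forall>x. Re (\<Sum>m<M. (\<Sum>m'<M. C m m' * x m') * cnj (x m)) \<ge> c * (\<Sum>m<M. (cmod (x m))\<^sup>2)"
  shows "\<exists>D :: nat \<Rightarrow> nat \<Rightarrow> complex.
            (\<forall>i<M. \<forall>j<M. (\<Sum>l<M. C i l * D l j) = (if i = j then 1 else 0)) \<and>
            (\<forall>i<M. \<forall>j<M. (\<Sum>l<M. D i l * C l j) = (if i = j then 1 else 0))"
proof -
  define A where "A = Matrix.mat M M (\<lambda>(i,j). C i j)"
  have A: "A \<in> carrier_mat M M" by (simp add: A_def)
  have "Determinant.det A \<noteq> 0"
  proof
    assume "Determinant.det A = 0"
    then obtain v where v: "v \<in> carrier_vec M" "v \<noteq> 0\<^sub>v M" "A *\<^sub>v v = 0\<^sub>v M"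
      using det_0_iff_vec_prod_zero[OF A] by auto
    define x where "x l = (if l < M then v $ l else 0)" for l
    have row0: "(\<Sum>m'<M. C m m' * x m') = 0" if m: "m < M" for m
    proof -
      have "(A *\<^sub>v v) $ m = 0" using v(3) m by simp
      moreover have "(A *\<^sub>v v) $ m = (\<Sum>m'<M. C m m' * x m')"
        using m v(1) by (auto simp: A_def scalar_prod_def x_def lessThan_atLeast0 intro!: sum.cong)
      ultimately show ?thesis by simp
    qed
    have "c * (\<Sum>m<M. (cmod (x m))\<^sup>2) \<le> 0" using pos[rule_format, of x] row0 by simp
    then have "(\<Sum>m<M. (cmod (x m))\<^sup>2) \<le> 0" using c by (simp add: mult_le_0_iff)
    then have "(\<Sum>m<M. (cmod (x m))\<^sup>2) = 0" by (meson antisym sum_nonneg zero_le_power2)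
    then have "\<forall>m\<in>{..<M}. (cmod (x m))\<^sup>2 = 0" by (subst (asm) sum_nonneg_eq_0_iff) auto
    then have "v = 0\<^sub>v M" using v(1) by (intro eq_vecI) (auto simp: x_def)
    with v(2) show False by simp
  qed
  from det_non_zero_imp_unit[OF A this, of "()"]
  obtain B where B: "B \<in> carrier_mat M M" "B * A = 1\<^sub>m M" "A * B = 1\<^sub>m M"
    unfolding Units_def ring_mat_def by auto
  show ?thesis
  proof (intro exI[of _ "\<lambda>i j. B $$ (i,j)"] conjI allI impI)
    fix i j assume ij: "i < M" "j < M"
    have "(A * B) $$ (i,j) = (\<Sum>l<M. C i l * B $$ (l,j))"
      using ij A B(1) by (auto simp: A_def scalar_prod_def lessThan_atLeast0 intro!: sum.cong)
    then show "(\<Sum>l<M. C i l * B $$ (l,j)) = (if i = j then 1 else 0)" using B(3) ij by simp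
    have "(B * A) $$ (i,j) = (\<Sum>l<M. B $$ (i,l) * C l j)"
      using ij A B(1) by (auto simp: A_def scalar_prod_def lessThan_atLeast0 intro!: sum.cong)
    then show "(\<Sum>l<M. B $$ (i,l) * C l j) = (if i = j then 1 else 0)" using B(2) ij by simp
  qed
qed

definition Gf :: "nat \<Rightarrow> nat \<Rightarrow> nat \<Rightarrow> complex" where
  "Gf M m t = exp (2*pi*\<i>* of_nat t * of_nat m / of_nat M)"

lemma cnj_Gf: "cnj (Gf M m t) = exp (-(2*pi*\<i>* of_nat t * of_nat m / of_nat M))"
  by (simp add: Gf_def exp_cnj)

lemma dft_cnj: "cnj (dft L g (real k)) = (\<Sum>t<L. cnj (g t) * exp (2*pi*\<i>* of_nat k * of_nat t / of_nat L))"
  by (simp add: dft_def exp_cnj)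

lemma aux_field:
  fixes Mc bc c t m m' k :: complex assumes "Mc \<noteq> 0" "bc \<noteq> 0"
  shows "-(c*t*m/Mc) + c*t*m'/Mc + (-(c*k*t/(Mc*bc))) = -(c*(k - (m' - m)*bc)*t/(Mc*bc))"
  using assms by (simp add: field_simps)

lemma dft_shift:
  assumes LMb: "L = M*b" and M: "M > 0" and b: "b > 0"
  shows "dft L g (real k - (real m' - real m) * real b) =
    (\<Sum>t<L. (g t * cnj (Gf M m t) * Gf M m' t) * exp (-(2*pi*\<i>* of_nat k * of_nat t / of_nat L)))"
  unfolding dft_def
proof (rule sum.cong[OF refl])
  fix t
  have Mz: "(of_nat M :: complex) \<noteq> 0" and bz: "(of_nat b :: complex) \<noteq> 0" using M b by auto
  have L': "(of_nat L :: complex) = of_nat M * of_nat b" using LMb by simp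
  have "cnj (Gf M m t) * Gf M m' t * exp (-(2*pi*\<i>* of_nat k * of_nat t / of_nat L))
      = exp (-(2*pi*\<i>* of_nat t * of_nat m / of_nat M) + 2*pi*\<i>* of_nat t * of_nat m' / of_nat M
             + (-(2*pi*\<i>* of_nat k * of_nat t / of_nat L)))"
    unfolding cnj_Gf by (simp only: Gf_def exp_add)
  also have "\<dots> = exp (- (2 * pi * \<i> * complex_of_real (real k - (real m' - real m) * real b) * of_nat t / of_nat L))"
    using aux_field[OF Mz bz, of "2*pi*\<i>" "of_nat t" "of_nat m" "of_nat m'" "of_nat k"]
    by (simp add: L' mult.assoc)
  finally show "g t * exp (- (2 * pi * \<i> * complex_of_real (real k - (real m' - real m) * real b) * of_nat t / of_nat L))
     = (g t * cnj (Gf M m t) * Gf M m' t) * exp (-(2*pi*\<i>* of_nat k * of_nat t / of_nat L))"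
    by (simp add: mult_ac)
qed

lemma sum_if_eq:
  assumes "finite A" "x \<in> A"
  shows "(\<Sum>t\<in>A. f t * (if x = t then c else 0)) = f x * (c::complex)"
proof -
  have "(\<Sum>t\<in>A. f t * (if x = t then c else 0)) = (\<Sum>t\<in>A. if t = x then f t * c else 0)"
    by (rule sum.cong) auto
  also have "\<dots> = f x * c" using assms by simp
  finally show ?thesis .
qed

lemma CGN_closed:
  assumes LMb: "L = M*b" and M: "M > 0" and b: "b > 0"
  shows "CGN L b \<sigma> g m m' = (\<Sum>t<L. of_real (\<sigma> * real L * (cmod (g t))\<^sup>2) * cnj (Gf M m t) * Gf M m' t)"
proof -
  have L: "L > 0" using LMb M b by simp
  define F where "F t = cnj (Gf M m t) * Gf M m' t" for t
  define e where "e k t = exp (2*pi*\<i>* of_nat k * of_nat t / of_nat L)" for k t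
  define e' where "e' k t = exp (-(2*pi*\<i>* of_nat k * of_nat t / of_nat L))" for k t
  have "(\<Sum>k<L. cnj (dft L g (real k)) * dft L g (real k - (real m' - real m) * real b))
     = (\<Sum>k<L. (\<Sum>t<L. cnj (g t) * e k t) * (\<Sum>t'<L. (g t' * F t') * e' k t'))"
    by (simp add: dft_cnj dft_shift[OF LMb M b] e_def e'_def F_def mult.assoc)
  also have "\<dots> = (\<Sum>k<L. \<Sum>t<L. \<Sum>t'<L. (cnj (g t) * (g t' * F t')) * (e k t * e' k t'))"
    unfolding sum_product by (intro sum.cong refl) (simp only: mult_ac)
  also have "\<dots> = (\<Sum>t<L. \<Sum>k<L. \<Sum>t'<L. (cnj (g t) * (g t' * F t')) * (e k t * e' k t'))"
    by (rule sum.swap)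
  also have "\<dots> = (\<Sum>t<L. \<Sum>t'<L. \<Sum>k<L. (cnj (g t) * (g t' * F t')) * (e k t * e' k t'))"
    by (rule sum.cong[OF refl], rule sum.swap)
  also have "\<dots> = (\<Sum>t<L. \<Sum>t'<L. (cnj (g t) * (g t' * F t')) * (if t = t' then of_nat L else 0))"
  proof (intro sum.cong refl)
    fix t t' assume tt: "t \<in> {..<L}" "t' \<in> {..<L}"
    show "(\<Sum>k<L. (cnj (g t) * (g t' * F t')) * (e k t * e' k t')) = (cnj (g t) * (g t' * F t')) * (if t = t' then of_nat L else 0)"
      unfolding sum_distrib_left[symmetric] e_def e'_def using ortho[OF L, of t t'] tt by simp
  qed
  also have "\<dots> = (\<Sum>t<L. (cnj (g t) * (g t * F t)) * of_nat L)"
    by (rule sum.cong[OF refl], rule sum_if_eq) auto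
  finally have "(\<Sum>k<L. cnj (dft L g (real k)) * dft L g (real k - (real m' - real m) * real b))
     = (\<Sum>t<L. (cnj (g t) * (g t * F t)) * of_nat L)" .
  then have "CGN L b \<sigma> g m m' = of_real \<sigma> * (\<Sum>t<L. (cnj (g t) * (g t * F t)) * of_nat L)"
    unfolding CGN_def by simp
  also have "\<dots> = (\<Sum>t<L. of_real (\<sigma> * real L * (cmod (g t))\<^sup>2) * cnj (Gf M m t) * Gf M m' t)"
    unfolding sum_distrib_left
  proof (rule sum.cong[OF refl])
    fix t
    have "cnj (g t) * g t = of_real ((cmod (g t))\<^sup>2)" by (metis complex_norm_square mult.commute)
    then show "of_real \<sigma> * ((cnj (g t) * (g t * F t)) * of_nat L) = of_real (\<sigma> * real L * (cmod (g t))\<^sup>2) * cnj (Gf M m t) * Gf M m' t"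
      unfolding F_def of_real_mult by (metis (no_types, lifting) mult.assoc mult.commute of_real_of_nat_eq)
  qed
  finally show ?thesis .
qed

lemma quad_gen:
  fixes w :: "'i \<Rightarrow> real" and h :: "'i \<Rightarrow> nat \<Rightarrow> complex" and x :: "nat \<Rightarrow> complex"
  assumes fin: "finite I"
  shows "(\<Sum>m<M. (\<Sum>m'<M. (\<Sum>k\<in>I. of_real (w k) * cnj (h k m) * h k m') * x m') * cnj (x m))
       = of_real (\<Sum>k\<in>I. w k * (cmod (\<Sum>m<M. h k m * x m))\<^sup>2)"
proof -
  define T where "T k m' m = of_real (w k) * (h k m' * x m') * (cnj (h k m) * cnj (x m))" for k m' m
  have "(\<Sum>m<M. (\<Sum>m'<M. (\<Sum>k\<in>I. of_real (w k) * cnj (h k m) * h k m') * x m') * cnj (x m))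
      = (\<Sum>m<M. \<Sum>m'<M. \<Sum>k\<in>I. T k m' m)"
    unfolding sum_distrib_right T_def by (intro sum.cong refl) (simp add: mult_ac)
  also have "\<dots> = (\<Sum>m'<M. \<Sum>m<M. \<Sum>k\<in>I. T k m' m)" by (rule sum.swap)
  also have "\<dots> = (\<Sum>m'<M. \<Sum>k\<in>I. \<Sum>m<M. T k m' m)" by (rule sum.cong[OF refl], rule sum.swap)
  also have "\<dots> = (\<Sum>k\<in>I. \<Sum>m'<M. \<Sum>m<M. T k m' m)" by (rule sum.swap)
  also have "\<dots> = (\<Sum>k\<in>I. of_real (w k) * ((\<Sum>m'<M. h k m' * x m') * cnj (\<Sum>m<M. h k m * x m)))"
  proof (rule sum.cong[OF refl])
    fix k
    have "(\<Sum>m'<M. h k m' * x m') * cnj (\<Sum>m<M. h k m * x m) = (\<Sum>m'<M. \<Sum>m<M. (h k m' * x m') * (cnj (h k m) * cnj (x m)))"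
      by (simp only: cnj_sum complex_cnj_mult sum_product)
    then show "(\<Sum>m'<M. \<Sum>m<M. T k m' m) = of_real (w k) * ((\<Sum>m'<M. h k m' * x m') * cnj (\<Sum>m<M. h k m * x m))"
      by (simp only: T_def sum_distrib_left mult.assoc)
  qed
  also have "\<dots> = of_real (\<Sum>k\<in>I. w k * (cmod (\<Sum>m<M. h k m * x m))\<^sup>2)"
    unfolding of_real_sum of_real_mult complex_norm_square ..
  finally show ?thesis .
qed

lemma Gf_periodic:
  assumes M: "M > 0"
  shows "Gf M m (t + j*M) = Gf M m t"
proof -
  have Mz: "(of_nat M :: complex) \<noteq> 0" using M by simp
  have "2*pi*\<i>* of_nat (t + j*M) * of_nat m / of_nat M = 2*pi*\<i>* of_nat t * of_nat m / of_nat M + of_nat (j*m) * (2*pi*\<i>)"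
    using Mz by (simp add: field_simps)
  then have "Gf M m (t + j*M) = Gf M m t * exp (of_nat (j*m) * (2*pi*\<i>))"
    by (simp only: Gf_def exp_add)
  also have "exp (of_nat (j*m) * (2*pi*\<i>)) = 1"
    by (simp only: exp_of_nat_mult) (simp add: mult.commute)
  finally show ?thesis by simp
qed

lemma regroup:
  fixes f :: "nat \<Rightarrow> real"
  shows "(\<Sum>t<b*M. f t) = (\<Sum>t<M. \<Sum>j<b. f (t + j*M))"
proof -
  have "(\<Sum>t<b*M. f t) = (\<Sum>j<b. sum f {j*M..<j*M+M})"
    by (rule sum.nat_group[symmetric])
  also have "\<dots> = (\<Sum>j<b. \<Sum>t<M. f (t + j*M))"
  proof (rule sum.cong[OF refl])
    fix j
    have "sum f {0 + j*M..<M + j*M} = (\<Sum>t\<in>{0..<M}. f (t + j*M))" by (rule sum.shift_bounds_nat_ivl)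
    then show "sum f {j*M..<j*M+M} = (\<Sum>t<M. f (t + j*M))" by (simp add: add.commute lessThan_atLeast0)
  qed
  also have "\<dots> = (\<Sum>t<M. \<Sum>j<b. f (t + j*M))" by (rule sum.swap)
  finally show ?thesis .
qed

lemma parseval_M:
  fixes x :: "nat \<Rightarrow> complex"
  assumes M: "M > 0"
  shows "(\<Sum>t<M. (cmod (\<Sum>m<M. Gf M m t * x m))\<^sup>2) = real M * (\<Sum>m<M. (cmod (x m))\<^sup>2)"
proof -
  have "complex_of_real (\<Sum>t<M. 1 * (cmod (\<Sum>m<M. Gf M m t * x m))\<^sup>2)
     = (\<Sum>m<M. (\<Sum>m'<M. (\<Sum>t<M. of_real 1 * cnj (Gf M m t) * Gf M m' t) * x m') * cnj (x m))"
    by (rule quad_gen[symmetric]) simp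
  also have "\<dots> = (\<Sum>m<M. (\<Sum>m'<M. x m' * (if m = m' then of_nat M else 0)) * cnj (x m))"
  proof (rule sum.cong[OF refl], rule arg_cong2[where f=times, OF _ refl], rule sum.cong[OF refl])
    fix m m' assume mm: "m \<in> {..<M}" "m' \<in> {..<M}"
    have "(\<Sum>t<M. of_real 1 * cnj (Gf M m t) * Gf M m' t) = (\<Sum>t<M. exp (2*pi*\<i>* of_nat t * of_nat m' / of_nat M) * exp (-(2*pi*\<i>* of_nat t * of_nat m / of_nat M)))"
      unfolding cnj_Gf by (simp add: Gf_def mult.commute)
    also have "\<dots> = (if m' = m then of_nat M else 0)" using ortho[OF M, of m' m] mm by simp
    finally show "(\<Sum>t<M. of_real 1 * cnj (Gf M m t) * Gf M m' t) * x m' = x m' * (if m = m' then of_nat M else 0)"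
      by auto
  qed
  also have "\<dots> = (\<Sum>m<M. (x m * of_nat M) * cnj (x m))"
    by (rule sum.cong[OF refl], rule arg_cong2[where f=times, OF _ refl], rule sum_if_eq) auto
  also have "\<dots> = complex_of_real (real M * (\<Sum>m<M. (cmod (x m))\<^sup>2))"
    unfolding of_real_mult of_real_sum sum_distrib_left complex_norm_square by (simp add: mult_ac)
  finally show ?thesis by (simp only: of_real_eq_iff mult_1)
qed

theorem proposition2:
  fixes L a b M :: nat and g :: "nat \<Rightarrow> complex" and S :: "nat \<Rightarrow> real"
    and \<sigma>0sq \<delta> :: real
  assumes "L > 0" and "a dvd L" and "b dvd L" and "M = L div b"
    and "Kg L b g > 0"
    and "\<forall>k<L. S k \<ge> 0"
    and "\<sigma>0sq > 0"
  shows "(\<forall>x :: nat \<Rightarrow> complex.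
            (\<Sum>m<M. (\<Sum>m'<M. CG L b S \<sigma>0sq \<delta> g m m' * x m') * cnj (x m)) \<in> \<real> \<and>
            Re (\<Sum>m<M. (\<Sum>m'<M. CG L b S \<sigma>0sq \<delta> g m m' * x m') * cnj (x m))
              \<ge> \<sigma>0sq * Kg L b g * (\<Sum>m<M. (cmod (x m))\<^sup>2))
       \<and> (\<exists>D :: nat \<Rightarrow> nat \<Rightarrow> complex.
            (\<forall>i<M. \<forall>j<M. (\<Sum>l<M. CG L b S \<sigma>0sq \<delta> g i l * D l j) = (if i = j then 1 else 0)) \<and>
            (\<forall>i<M. \<forall>j<M. (\<Sum>l<M. D i l * CG L b S \<sigma>0sq \<delta> g l j) = (if i = j then 1 else 0)))"
proof -
  note L = assms(1) and bL = assms(3) and Mdef = assms(4) and K = assms(5) and Spos = assms(6) and sig = assms(7)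
  have b: "b > 0" using L bL by (cases b) auto
  have LMb: "L = M * b" using bL Mdef by simp
  have M: "M > 0" using LMb L by (cases M) auto
  have finI: "finite (Iplus L)"
    by (rule finite_subset[of _ "{..<L}"]) (auto simp: Iplus_def)
  define K where "K = Kg L b g"
  define hZ where "hZ k m = dft L g (real k - (real m - \<delta>) * real b)" for k m
  define wN where "wN t = \<sigma>0sq * real L * (cmod (g t))\<^sup>2" for t
  define X where "X x t = (\<Sum>m<M. Gf M m t * x m)" for x :: "nat \<Rightarrow> complex" and t
  define ZZ where "ZZ x = (\<Sum>k\<in>Iplus L. S k * (cmod (\<Sum>m<M. hZ k m * x m))\<^sup>2)" for x :: "nat \<Rightarrow> complex"
  define NN where "NN x = (\<Sum>t<L. wN t * (cmod (X x t))\<^sup>2)" for x :: "nat \<Rightarrow> complex"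
  have CGeq: "CG L b S \<sigma>0sq \<delta> g m m' = (\<Sum>k\<in>Iplus L. of_real (S k) * cnj (hZ k m) * hZ k m')
      + (\<Sum>t<L. of_real (wN t) * cnj (Gf M m t) * Gf M m' t)" for m m'
    unfolding CG_def CGZ_def CGN_closed[OF LMb M b] hZ_def wN_def by simp
  have Qeq: "(\<Sum>m<M. (\<Sum>m'<M. CG L b S \<sigma>0sq \<delta> g m m' * x m') * cnj (x m)) = of_real (ZZ x + NN x)" for x
  proof -
    have "(\<Sum>m<M. (\<Sum>m'<M. CG L b S \<sigma>0sq \<delta> g m m' * x m') * cnj (x m))
      = (\<Sum>m<M. (\<Sum>m'<M. (\<Sum>k\<in>Iplus L. of_real (S k) * cnj (hZ k m) * hZ k m') * x m') * cnj (x m))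
      + (\<Sum>m<M. (\<Sum>m'<M. (\<Sum>t<L. of_real (wN t) * cnj (Gf M m t) * Gf M m' t) * x m') * cnj (x m))"
      unfolding CGeq distrib_right sum.distrib ..
    also have "\<dots> = of_real (ZZ x) + of_real (NN x)"
      unfolding ZZ_def NN_def X_def by (simp only: quad_gen[OF finI] quad_gen[OF finite_lessThan])
    finally show ?thesis by simp
  qed
  have ZZpos: "ZZ x \<ge> 0" for x
    unfolding ZZ_def using Spos by (intro sum_nonneg mult_nonneg_nonneg) (auto simp: Iplus_def)
  have bK: "real b * K = Min ((\<lambda>t. \<Sum>k<b. (cmod (g ((t + k * M) mod L)))\<^sup>2) ` {..<M})"
    unfolding K_def Kg_def using b Mdef by simp
  have gbound: "(\<Sum>j<b. (cmod (g (t + j*M)))\<^sup>2) \<ge> real b * K" if t: "t < M" for t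
  proof -
    have "real b * K \<le> (\<Sum>k<b. (cmod (g ((t + k * M) mod L)))\<^sup>2)"
      unfolding bK using t by (intro Min_le) auto
    also have "\<dots> = (\<Sum>j<b. (cmod (g (t + j*M)))\<^sup>2)"
    proof (rule sum.cong[OF refl])
      fix j assume "j \<in> {..<b}"
      then have jb: "Suc j \<le> b" by simp
      have "t + j*M < M + j*M" using t by simp
      also have "M + j*M = Suc j * M" by simp
      also have "\<dots> \<le> b * M" using jb by (rule mult_le_mono1)
      finally have "t + j*M < L" using LMb by (simp add: mult.commute)
      then show "(cmod (g ((t + j * M) mod L)))\<^sup>2 = (cmod (g (t + j*M)))\<^sup>2" by simp
    qed
    finally show ?thesis .
  qed
  have NNbound: "NN x \<ge> \<sigma>0sq * K * (\<Sum>m<M. (cmod (x m))\<^sup>2)" for x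
  proof -
    have "NN x = (\<Sum>t<M. \<Sum>j<b. wN (t + j*M) * (cmod (X x (t + j*M)))\<^sup>2)"
      unfolding NN_def LMb mult.commute[of M b] by (rule regroup)
    also have "\<dots> = (\<Sum>t<M. (\<sigma>0sq * real L * (cmod (X x t))\<^sup>2) * (\<Sum>j<b. (cmod (g (t + j*M)))\<^sup>2))"
      unfolding sum_distrib_left
    proof (rule sum.cong[OF refl], rule sum.cong[OF refl])
      fix t j
      have Xp: "X x (t + j*M) = X x t" unfolding X_def Gf_periodic[OF M] ..
      show "wN (t + j*M) * (cmod (X x (t + j*M)))\<^sup>2 = \<sigma>0sq * real L * (cmod (X x t))\<^sup>2 * (cmod (g (t + j*M)))\<^sup>2"
        unfolding Xp wN_def by (simp only: mult_ac)
    qed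
    also have "\<dots> \<ge> (\<Sum>t<M. (\<sigma>0sq * real L * (cmod (X x t))\<^sup>2) * (real b * K))"
      using sig gbound by (intro sum_mono mult_left_mono) auto
    also have "(\<Sum>t<M. (\<sigma>0sq * real L * (cmod (X x t))\<^sup>2) * (real b * K)) = \<sigma>0sq * real L * real b * K * (\<Sum>t<M. (cmod (X x t))\<^sup>2)"
      unfolding sum_distrib_right[symmetric] sum_distrib_left[symmetric] by (simp only: mult_ac)
    finally have "NN x \<ge> \<sigma>0sq * real L * real b * K * (\<Sum>t<M. (cmod (X x t))\<^sup>2)" .
    also have "(\<Sum>t<M. (cmod (X x t))\<^sup>2) = real M * (\<Sum>m<M. (cmod (x m))\<^sup>2)"
      unfolding X_def by (rule parseval_M[OF M])
    also have "\<sigma>0sq * real L * real b * K * (real M * (\<Sum>m<M. (cmod (x m))\<^sup>2)) = (\<sigma>0sq * K * (\<Sum>m<M. (cmod (x m))\<^sup>2)) * (real L * real b * real M)"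
      by (simp only: mult_ac)
    finally have 1: "NN x \<ge> (\<sigma>0sq * K * (\<Sum>m<M. (cmod (x m))\<^sup>2)) * (real L * real b * real M)" .
    have "(1::nat) \<le> L * b * M" using L b M by (simp add: Suc_le_eq)
    then have h1: "(1::real) \<le> real L * real b * real M"
      by (metis of_nat_1 of_nat_le_iff of_nat_mult)
    have h0: "\<sigma>0sq * K * (\<Sum>m<M. (cmod (x m))\<^sup>2) \<ge> 0"
      using sig K unfolding K_def by (intro mult_nonneg_nonneg sum_nonneg) auto
    have "\<sigma>0sq * K * (\<Sum>m<M. (cmod (x m))\<^sup>2) \<le> (\<sigma>0sq * K * (\<Sum>m<M. (cmod (x m))\<^sup>2)) * (real L * real b * real M)"
      using mult_left_mono[OF h1 h0] by simp
    with 1 show ?thesis by linarith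
  qed
  have pos: "\<forall>x. Re (\<Sum>m<M. (\<Sum>m'<M. CG L b S \<sigma>0sq \<delta> g m m' * x m') * cnj (x m))
              \<ge> \<sigma>0sq * Kg L b g * (\<Sum>m<M. (cmod (x m))\<^sup>2)"
  proof
    fix x
    show "Re (\<Sum>m<M. (\<Sum>m'<M. CG L b S \<sigma>0sq \<delta> g m m' * x m') * cnj (x m))
              \<ge> \<sigma>0sq * Kg L b g * (\<Sum>m<M. (cmod (x m))\<^sup>2)"
      unfolding Qeq Re_complex_of_real using ZZpos[of x] NNbound[of x] unfolding K_def by linarith
  qed
  have c: "\<sigma>0sq * Kg L b g > 0" using sig assms(5) by simp
  have real: "\<forall>x. (\<Sum>m<M. (\<Sum>m'<M. CG L b S \<sigma>0sq \<delta> g m m' * x m') * cnj (x m)) \<in> \<real>"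
    unfolding Qeq by simp
  show ?thesis
    using pos real inv_from_pos[OF c pos] by blast
qed

end
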